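(* Let $\lambda\in\mathbb T$, $n\in\mathbb N$ and $f\in\mathcal H_{\sigma,n-1}$. Then $((z-\lambda)f)^{(n)}(z)=0$ for all $z\in\mathbb D$ if and only if $D_{\sigma,n-1}(f)=0$.
   Context: $\mathbb D$ open unit disc, $\mathbb T$ unit circle. For $f=\sum_ka_kz^k\in\mathcal O(\mathbb D)$ and $j\ge0$, $D_{\sigma,j}(f)=\sum_{k\ge j}\binom kj|a_k|^2$ and $\mathcal H_{\sigma,j}=\{f\in\mathcal O(\mathbb D):D_{\sigma,j}(f)<\infty\}$. *)

theory Defs
  imports "HOL-Complex_Analysis.Complex_Analysis"
begin

definition taylor_coeff :: "(complex \<Rightarrow> complex) \<Rightarrow> nat \<Rightarrow> complex" where
  "taylor_coeff f k = (deriv ^^ k) f 0 / of_nat (fact k)"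

definition D_sigma :: "nat \<Rightarrow> (complex \<Rightarrow> complex) \<Rightarrow> real" where
  "D_sigma j f = (\<Sum>\<^sub>\<infinity>k\<in>{j..}. real (k choose j) * (cmod (taylor_coeff f k))\<^sup>2)"

definition H_sigma :: "nat \<Rightarrow> (complex \<Rightarrow> complex) set" where
  "H_sigma j = {f. f holomorphic_on ball 0 1 \<and>
     (\<lambda>k. real (k choose j) * (cmod (taylor_coeff f k))\<^sup>2) summable_on {j..}}"

end

theory Submission
  imports Defs "HOL-Computational_Algebra.Polynomial"
begin

lemma hd_lin: "(deriv ^^ i) (\<lambda>w. w - c) = (\<lambda>z::complex. if i=0 then z-c else if i=1 then 1 else 0)"
  by (induction i) auto

lemma pderiv_funpow_0: "(pderiv ^^ n) (0::complex poly) = 0"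
  by (induction n) auto

lemma pderiv_funpow_vanish: "degree (q::complex poly) < n \<Longrightarrow> (pderiv ^^ n) q = 0"
proof (induction n arbitrary: q)
  case 0 then show ?case by simp
next
  case (Suc n)
  have e: "(pderiv ^^ Suc n) q = (pderiv ^^ n) (pderiv q)" by (simp only: funpow_Suc_right o_apply)
  show ?case
  proof (cases "degree q = 0")
    case True
    then have "pderiv q = 0" using pderiv_eq_0_iff by blast
    then show ?thesis using e pderiv_funpow_0 by simp
  next
    case False
    then have "degree (pderiv q) < n" using Suc.prems degree_pderiv[of q] by linarith
    then show ?thesis using e Suc.IH by simp
  qed
qed

lemma hd_poly: "(deriv ^^ n) (poly p) = poly ((pderiv ^^ n) (p::complex poly))"
proof (induction n)
  case 0 then show ?case by simp
next
  case (Suc n)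
  have "deriv (poly q) = poly (pderiv q)" for q :: "complex poly"
    by (rule ext, rule DERIV_imp_deriv, rule poly_DERIV)
  then show ?case using Suc by simp
qed

lemma coeff_rel:
  fixes f :: "complex \<Rightarrow> complex"
  assumes hol: "f holomorphic_on ball 0 1" and k: "k \<ge> 1"
  shows "(deriv ^^ k) (\<lambda>w. (w - lam) * f w) 0
         = of_nat k * (deriv ^^ (k-1)) f 0 - lam * (deriv ^^ k) f 0"
proof -
  have h1: "(\<lambda>w. w - lam) holomorphic_on ball 0 1" by (intro holomorphic_intros)
  define c where "c i = of_nat (k choose i) * (deriv ^^ i) (\<lambda>w. w - lam) (0::complex) * (deriv ^^ (k-i)) f 0" for i
  have "(deriv ^^ k) (\<lambda>w. (w - lam) * f w) 0 = (\<Sum>i = 0..k. c i)"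
    unfolding c_def by (rule higher_deriv_mult[OF h1 hol]) auto
  also have "\<dots> = c 0 + c 1"
  proof -
    obtain m where m: "k = Suc m" using k by (cases k) auto
    have "(\<Sum>i = 0..k. c i) = c 0 + (\<Sum>i = Suc 0..Suc m. c i)"
      using m by (simp add: sum.atLeast_Suc_atMost)
    also have "(\<Sum>i = Suc 0..Suc m. c i) = c 1 + (\<Sum>i = Suc (Suc 0)..Suc m. c i)"
      by (simp add: sum.atLeast_Suc_atMost)
    also have "(\<Sum>i = Suc (Suc 0)..Suc m. c i) = 0"
      by (rule sum.neutral) (auto simp: c_def hd_lin)
    finally show ?thesis by simp
  qed
  also have "\<dots> = of_nat k * (deriv ^^ (k-1)) f 0 - lam * (deriv ^^ k) f 0"
    by (simp add: c_def hd_lin)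
  finally show ?thesis .
qed

theorem lemma2p2:
  fixes lam :: complex and n :: nat and f :: "complex \<Rightarrow> complex"
  assumes "cmod lam = 1"
    and "n \<ge> 1"
    and "f \<in> H_sigma (n - 1)"
  shows "(\<forall>z\<in>ball 0 1. (deriv ^^ n) (\<lambda>w. (w - lam) * f w) z = 0) \<longleftrightarrow> D_sigma (n - 1) f = 0"
proof -
  define j where "j = n - 1"
  define a where "a = taylor_coeff f"
  define t where "t k = real (k choose j) * (cmod (a k))\<^sup>2" for k
  define g where "g = (\<lambda>w. (w - lam) * f w)"
  have hol: "f holomorphic_on ball 0 1" and summ: "t summable_on {j..}"
    using assms(3) unfolding H_sigma_def t_def a_def j_def by auto
  have Dt: "D_sigma (n-1) f = infsum t {j..}"
    unfolding D_sigma_def t_def a_def j_def ..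
  have t_nn: "t k \<ge> 0" for k unfolding t_def by simp
  have t0: "t k = 0 \<longleftrightarrow> a k = 0" if "k \<ge> j" for k
  proof -
    have "k choose j > 0" using that by simp
    then show ?thesis unfolding t_def by simp
  qed
  show ?thesis
  proof
    assume H: "\<forall>z\<in>ball 0 1. (deriv ^^ n) (\<lambda>w. (w - lam) * f w) z = 0"
    have hz: "(deriv ^^ (m + n)) g 0 = 0" for m
    proof -
      have "(deriv ^^ (m + n)) g 0 = (deriv ^^ m) ((deriv ^^ n) g) 0"
        by (simp add: funpow_add)
      also have "\<dots> = (deriv ^^ m) (\<lambda>_. 0) 0"
      proof (rule higher_deriv_cong_ev)
        have "eventually (\<lambda>x. x \<in> ball (0::complex) 1) (nhds 0)"
          by (rule eventually_nhds_in_open) auto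
        then show "eventually (\<lambda>x. (deriv ^^ n) g x = 0) (nhds 0)"
          by eventually_elim (use H g_def in auto)
      qed simp
      also have "\<dots> = 0" by simp
      finally show ?thesis .
    qed
    have rel: "a (k-1) = lam * a k" if "k \<ge> n" for k
    proof -
      have k1: "k \<ge> 1" using that assms(2) by simp
      have "of_nat k * (deriv ^^ (k-1)) f 0 - lam * (deriv ^^ k) f 0 = 0"
        using coeff_rel[OF hol k1, of lam] hz[of "k - n"] that g_def by simp
      then have e: "of_nat k * (deriv ^^ (k-1)) f 0 = lam * (deriv ^^ k) f 0" by simp
      have fk: "(fact k :: complex) = of_nat k * fact (k-1)"
        using k1 by (cases k) (auto simp: fact_Suc)
      have "a (k-1) = (deriv ^^ (k-1)) f 0 / fact (k-1)"
        unfolding a_def taylor_coeff_def by simp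
      also have "\<dots> = (of_nat k * (deriv ^^ (k-1)) f 0) / fact k"
        using k1 fk by (simp add: field_simps)
      also have "\<dots> = lam * a k" unfolding e a_def taylor_coeff_def by simp
      finally show ?thesis .
    qed
    have absrel: "cmod (a (j + d)) = cmod (a j)" for d
    proof (induction d)
      case 0 then show ?case by simp
    next
      case (Suc d)
      have "a (j + d) = lam * a (j + Suc d)"
        using rel[of "j + Suc d"] j_def assms(2) by simp
      then have "cmod (a (j + d)) = cmod (a (j + Suc d))"
        using assms(1) by (simp add: norm_mult)
      then show ?case using Suc by simp
    qed
    have "(\<lambda>i. t (i + j)) summable_on UNIV"
    proof -
      have "t summable_on ((\<lambda>i. i + j) ` UNIV)"
      proof -
        have "(\<lambda>i. i + j) ` UNIV = {j..}"
          proof (intro equalityI subsetI)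
          fix x :: nat assume "x \<in> {j..}"
          then show "x \<in> (\<lambda>i. i + j) ` UNIV" by (intro image_eqI[of _ _ "x - j"]) auto
        qed auto
        then show ?thesis using summ by simp
      qed
      then show ?thesis by (subst (asm) summable_on_reindex) (auto simp: o_def)
    qed
    then have "summable (\<lambda>i. t (i + j))"
      using summable_on_UNIV_nonneg_real_iff[of "\<lambda>i. t (i + j)", OF t_nn] by simp
    then have lim: "(\<lambda>i. t (i + j)) \<longlonglongrightarrow> 0" by (rule summable_LIMSEQ_zero)
    have ge: "t (i + j) \<ge> (cmod (a j))\<^sup>2" for i
    proof -
      have "(i + j) choose j > 0" by simp
      then have "real ((i + j) choose j) \<ge> 1" by linarith
      then show ?thesis unfolding t_def using absrel[of i]
        by (simp add: add.commute mult_le_cancel_right1)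
    qed
    have "(cmod (a j))\<^sup>2 \<le> 0"
      using lim ge by (intro LIMSEQ_le_const[OF lim]) auto
    then have aj: "a j = 0" by simp
    have "a k = 0" if "k \<ge> j" for k
      using absrel[of "k - j"] aj that by simp
    then have "infsum t {j..} = 0"
      by (intro infsum_0) (auto simp: t_def)
    then show "D_sigma (n - 1) f = 0" using Dt by simp
  next
    assume D0: "D_sigma (n - 1) f = 0"
    have az: "a k = 0" if "k \<ge> j" for k
    proof -
      have "infsum t {k} \<le> infsum t {j..}"
        by (rule infsum_mono_neutral) (use summ that t_nn in auto)
      then have "t k \<le> 0" using D0 Dt by simp
      then have "t k = 0" using t_nn[of k] by simp
      then show ?thesis using t0 that by simp
    qed
    define s where "s = (\<Sum>k<j. monom (a k) k)"
    define p where "p = [:-lam, 1:] * s"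
    have fp: "g w = poly p w" if "w \<in> ball 0 1" for w
    proof -
      have "(\<lambda>k. (deriv ^^ k) f 0 / fact k * (w - 0) ^ k) sums f w"
        by (rule holomorphic_power_series[OF hol]) (use that in simp)
      then have s1: "(\<lambda>k. a k * w ^ k) sums f w"
        by (simp add: a_def taylor_coeff_def)
      have "(\<lambda>k. a k * w ^ k) sums (\<Sum>k\<in>{..<j}. a k * w ^ k)"
        by (rule sums_finite) (auto simp: az)
      then have "f w = (\<Sum>k<j. a k * w ^ k)" using s1 sums_unique2 by blast
      then show ?thesis
        by (simp add: g_def p_def s_def poly_sum poly_monom algebra_simps)
    qed
    have degp: "degree p < n"
    proof (cases "j = 0")
      case True
      then have "p = 0" by (simp add: p_def s_def)
      then show ?thesis using assms(2) by simp
    next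
      case False
      have "degree s \<le> j - 1" unfolding s_def
        by (rule degree_sum_le) (auto intro: order.trans[OF degree_monom_le])
      moreover have "degree p \<le> degree [:-lam, 1:] + degree s"
        unfolding p_def by (rule degree_mult_le)
      ultimately have "degree p \<le> 1 + (j - 1)" by simp
      then show ?thesis using False j_def by simp
    qed
    show "\<forall>z\<in>ball 0 1. (deriv ^^ n) (\<lambda>w. (w - lam) * f w) z = 0"
    proof
      fix z :: complex assume z: "z \<in> ball 0 1"
      have "(deriv ^^ n) g z = (deriv ^^ n) (poly p) z"
      proof (rule higher_deriv_cong_ev)
        have "eventually (\<lambda>x. x \<in> ball (0::complex) 1) (nhds z)"
          by (rule eventually_nhds_in_open) (use z in auto)
        then show "eventually (\<lambda>x. g x = poly p x) (nhds z)"
          by eventually_elim (use fp in auto)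
      qed simp
      also have "\<dots> = 0" using hd_poly pderiv_funpow_vanish[OF degp] by simp
      finally show "(deriv ^^ n) (\<lambda>w. (w - lam) * f w) z = 0" by (simp add: g_def)
    qed
  qed
qed

end
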